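(* Let $A\in\mathbb{R}^{N\times N}$ be symmetric positive semidefinite with smallest eigenvalue $\omega\ge0$, let $f$ be a sufficiently smooth $\mathbb{R}^N$-valued function, $\varepsilon>0$, $\tau>0$, $t_k=k\tau$, $f^k=f(t_k)$, and fix $n\ge1$. Let $y$ be a solution of $y'=-Ay+f$. Let $\tilde y$ be the solution of $\tilde y'+\varepsilon\tilde y''=-A\tilde y+f$ on an interval containing $[t_{n-1},t_{n+1}]$ with $\tilde y(t_n)=y(t_n)$, $\tilde y'(t_n)=y'(t_n)$, and assume $\tilde y$ is four times continuously differentiable there. Let $y^{n+1}$ be obtained by one step of the HM scheme $$\frac{y^{n+1}-y^{n-1}}{2\tau}+\varepsilon\frac{y^{n+1}-2y^n+y^{n-1}}{\tau^2}=-Ay^n+f^n$$ from the starting values $y^{n-1}=\tilde y(t_{n-1})$, $y^n=\tilde y(t_n)=y(t_n)$, and let $e^{n+1}=y(t_{n+1})-y^{n+1}$. Then $$e^{n+1}=\frac{2\tau^4}{\tau+2\varepsilon}\,C_1+\frac{2\tau^4\varepsilon}{\tau+2\varepsilon}\,C_2+\tilde e^{n+1}(\tau),\qquad \tilde e^{n+1}(\tau)=y(t_{n+1})-\tilde y(t_{n+1}),$$ where $C_1,C_2\in\mathbb{R}^N$ are such that for each component $i$ there exist points $\eta_{1,i},\eta_{2,i}\in[t_{n-1},t_{n+1}]$ with $(C_1)_i=\frac16\tilde y_i'''(\eta_{1,i})$ and $(C_2)_i=\frac1{12}\tilde y_i^{(4)}(\eta_{2,i})$. Moreover, for any vector norm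 $\|\cdot\|$ and constant $C$ with $\|e^{-tA}\|\le Ce^{-\omega t}$ for all $t\ge0$ (induced operator norm), $$\|\tilde e^{n+1}(\tau)\|\le C\varepsilon\,\tau\,\varphi(-\omega\tau)\max_{s\in[t_n,t_{n+1}]}\|\tilde y''(s)\|.$$
   Context: $\varphi(z)=(e^z-1)/z$ for $z\neq0$ and $\varphi(0)=1$. *)

theory Defs
  imports "HOL-Analysis.Analysis"
begin

definition phi :: "real \<Rightarrow> real" where
  "phi z = (if z = 0 then 1 else (exp z - 1) / z)"

fun matpow :: "real^'n^'n \<Rightarrow> nat \<Rightarrow> real^'n^'n" where
  "matpow M 0 = mat 1"
| "matpow M (Suc k) = M ** matpow M k"

definition mat_exp :: "real^'n^'n \<Rightarrow> real^'n^'n" where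
  "mat_exp M = (\<Sum>k. (1 / fact k) *\<^sub>R matpow M k)"

definition symmetric_matrix :: "real^'n^'n \<Rightarrow> bool" where
  "symmetric_matrix A \<longleftrightarrow> transpose A = A"

definition psd_matrix :: "real^'n^'n \<Rightarrow> bool" where
  "psd_matrix A \<longleftrightarrow> (\<forall>x. 0 \<le> x \<bullet> (A *v x))"

definition is_eigenvalue :: "real^'n^'n \<Rightarrow> real \<Rightarrow> bool" where
  "is_eigenvalue A \<mu> \<longleftrightarrow> (\<exists>v. v \<noteq> 0 \<and> A *v v = \<mu> *\<^sub>R v)"

definition smallest_eigenvalue :: "real^'n^'n \<Rightarrow> real \<Rightarrow> bool" where
  "smallest_eigenvalue A \<omega> \<longleftrightarrow> is_eigenvalue A \<omega> \<and> (\<forall>\<mu>. is_eigenvalue A \<mu> \<longrightarrow> \<omega> \<le> \<mu>)"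

definition is_vector_norm :: "(real^'n \<Rightarrow> real) \<Rightarrow> bool" where
  "is_vector_norm \<nu> \<longleftrightarrow>
     (\<forall>x. 0 \<le> \<nu> x) \<and> (\<forall>x. \<nu> x = 0 \<longleftrightarrow> x = 0) \<and>
     (\<forall>c x. \<nu> (c *\<^sub>R x) = \<bar>c\<bar> * \<nu> x) \<and> (\<forall>x y. \<nu> (x + y) \<le> \<nu> x + \<nu> y)"

definition induced_norm :: "(real^'n \<Rightarrow> real) \<Rightarrow> real^'n^'n \<Rightarrow> real" where
  "induced_norm \<nu> M = (SUP x \<in> {x. x \<noteq> 0}. \<nu> (M *v x) / \<nu> x)"

end

theory Submission
  imports Defs
begin


lemma norm_vec_le_sum: "norm (x::'a::real_normed_vector^'n) \<le> (\<Sum>i\<in>UNIV. norm (x $ i))"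
  unfolding norm_vec_def by (rule L2_set_le_sum) auto

lemma norm_mat_le_onorm:
  fixes P :: "real^'n^'n"
  shows "norm P \<le> real CARD('n) * real CARD('n) * onorm ((*v) P)"
proof -
  have "norm P \<le> (\<Sum>i\<in>UNIV. norm (P $ i))" by (rule norm_vec_le_sum)
  also have "\<dots> \<le> (\<Sum>i\<in>(UNIV::'n set). \<Sum>j\<in>(UNIV::'n set). \<bar>P $ i $ j\<bar>)"
    by (intro sum_mono norm_le_l1_cart)
  also have "\<dots> \<le> (\<Sum>i\<in>(UNIV::'n set). \<Sum>j\<in>(UNIV::'n set). onorm ((*v) P))"
    by (intro sum_mono matrix_component_le_onorm)
  also have "\<dots> = real CARD('n) * real CARD('n) * onorm ((*v) P)" by simp
  finally show ?thesis .
qed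

lemma matpow_onorm:
  fixes M :: "real^'n^'n"
  shows "onorm ((*v) (matpow M k)) \<le> onorm ((*v) M) ^ k"
proof (induction k)
  case 0
  have "(*v) (mat 1 :: real^'n^'n) = (\<lambda>x::real^'n. x)"
    by (rule ext) simp
  then show ?case using onorm_id_le[where 'a="real^'n"] by simp
next
  case (Suc k)
  have eq: "(*v) (matpow M (Suc k)) = (*v) M \<circ> (*v) (matpow M k)"
    by (auto simp: fun_eq_iff matrix_vector_mul_assoc)
  have "onorm ((*v) (matpow M (Suc k))) \<le> onorm ((*v) M) * onorm ((*v) (matpow M k))"
    unfolding eq by (rule onorm_compose) auto
  also have "\<dots> \<le> onorm ((*v) M) * onorm ((*v) M) ^ k"
    by (intro mult_left_mono Suc onorm_pos_le) auto
  finally show ?case by simp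
qed

lemma matpow_scaleR: "matpow (c *\<^sub>R M) k = (c ^ k) *\<^sub>R matpow M k"
  by (induction k) (auto simp: matrix_scalar_ac scalar_matrix_assoc mult.commute)

lemma matpow_comm: "M ** matpow M k = matpow M k ** M"
  by (induction k) (auto simp: matrix_mul_assoc)

lemma matpow_zero: "matpow (0::real^'n^'n) k = (if k = 0 then mat 1 else 0)"
  by (cases k) auto

definition ES :: "real^'n^'n \<Rightarrow> real \<Rightarrow> real^'n^'n" where
  "ES M u = (\<Sum>k. (u ^ k / fact k) *\<^sub>R matpow M k)"

lemma ES_summable: "summable (\<lambda>k. (u ^ k / fact k) *\<^sub>R matpow (M::real^'n^'n) k)"
proof (rule summable_comparison_test)
  let ?c = "real CARD('n) * real CARD('n)"
  let ?r = "\<bar>u\<bar> * onorm ((*v) M)"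
  show "summable (\<lambda>k. ?c * (?r ^ k /\<^sub>R fact k))"
    by (intro summable_mult summable_exp_generic)
  show "\<exists>N. \<forall>k\<ge>N. norm ((u ^ k / fact k) *\<^sub>R matpow M k) \<le> ?c * (?r ^ k /\<^sub>R fact k)"
  proof (intro exI allI impI)
    fix k :: nat
    have "norm ((u ^ k / fact k) *\<^sub>R matpow M k) = (\<bar>u\<bar> ^ k / fact k) * norm (matpow M k)"
      by (simp add: power_abs)
    also have "\<dots> \<le> (\<bar>u\<bar> ^ k / fact k) * (?c * onorm ((*v) M) ^ k)"
      by (intro mult_left_mono order_trans[OF norm_mat_le_onorm] mult_left_mono matpow_onorm) auto
    also have "\<dots> = ?c * (?r ^ k /\<^sub>R fact k)"
      by (simp add: power_mult_distrib divide_inverse)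
    finally show "norm ((u ^ k / fact k) *\<^sub>R matpow M k) \<le> ?c * (?r ^ k /\<^sub>R fact k)" .
  qed
qed

lemma mat_exp_ES: "mat_exp (c *\<^sub>R M) = ES M c"
  unfolding mat_exp_def ES_def matpow_scaleR by (simp add: divide_inverse mult.commute)

lemma ES_zero: "ES M 0 = mat 1"
proof -
  have "(\<lambda>k. ((0::real) ^ k / fact k) *\<^sub>R matpow M k) = (\<lambda>k. if k = 0 then matpow M k else 0)"
    by auto
  moreover have "(\<lambda>k. if k = 0 then matpow M k else 0) sums matpow M 0"
    using sums_single[of 0 "matpow M"] by simp
  ultimately show ?thesis unfolding ES_def by (simp add: sums_iff)
qed

lemma bounded_linear_matmul_left: "bounded_linear (\<lambda>X::real^'n^'n. M ** X)"
  by (rule linear_conv_bounded_linear[THEN iffD1], rule linearI) (auto simp: matrix_add_ldistrib matrix_scalar_ac scalar_matrix_assoc)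

lemma bounded_linear_matmul_right: "bounded_linear (\<lambda>X::real^'n^'n. X ** M)"
  by (rule linear_conv_bounded_linear[THEN iffD1], rule linearI) (auto simp: matrix_matrix_mult_def vec_eq_iff sum.distrib algebra_simps scaleR_sum_right sum_distrib_left)

lemma ES_comm: "M ** ES M u = ES M u ** M"
proof -
  have "M ** ES M u = (\<Sum>k. M ** ((u ^ k / fact k) *\<^sub>R matpow M k))"
    unfolding ES_def by (rule bounded_linear.suminf[OF bounded_linear_matmul_left ES_summable])
  also have "\<dots> = (\<Sum>k. ((u ^ k / fact k) *\<^sub>R matpow M k) ** M)"
    by (simp add: matrix_scalar_ac scalar_matrix_assoc[symmetric] matpow_comm)
  also have "\<dots> = ES M u ** M"
    unfolding ES_def by (rule bounded_linear.suminf[OF bounded_linear_matmul_right ES_summable, symmetric])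
  finally show ?thesis .
qed

lemma fact_Suc_div: "of_nat (Suc k) * (a / fact (Suc k)) = (a / fact k :: real)"
proof -
  have "fact (Suc k) = of_nat (Suc k) * (fact k :: real)" by (rule fact_Suc)
  then show ?thesis by (simp del: of_nat_Suc)
qed

lemma has_vector_derivative_mat_components:
  fixes F :: "real \<Rightarrow> real^'n^'m"
  assumes "\<And>i j. ((\<lambda>u. F u $ i $ j) has_real_derivative (F' $ i $ j)) (at x within S)"
  shows "(F has_vector_derivative F') (at x within S)"
proof -
  have c: "((\<lambda>y. (1 / norm (y - x)) * (F y $ i $ j - (F x $ i $ j + (y - x) * F' $ i $ j))) \<longlongrightarrow> 0) (at x within S)" for i j
    using assms[of i j] unfolding has_field_derivative_def has_derivative_within by (auto simp: mult.commute)
  show ?thesis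
    unfolding has_vector_derivative_def has_derivative_within
  proof
    show "bounded_linear (\<lambda>h. h *\<^sub>R F')" by (rule bounded_linear_scaleR_left)
    show "((\<lambda>y. (1 / norm (y - x)) *\<^sub>R (F y - (F x + (y - x) *\<^sub>R F'))) \<longlongrightarrow> 0) (at x within S)"
    proof (rule vec_tendstoI)
      fix i
      show "((\<lambda>y. ((1 / norm (y - x)) *\<^sub>R (F y - (F x + (y - x) *\<^sub>R F'))) $ i) \<longlongrightarrow> 0 $ i) (at x within S)"
      proof (rule vec_tendstoI)
        fix j
        show "((\<lambda>y. ((1 / norm (y - x)) *\<^sub>R (F y - (F x + (y - x) *\<^sub>R F'))) $ i $ j) \<longlongrightarrow> 0 $ i $ j) (at x within S)"
          using c[of i j] by simp
      qed
    qed
  qed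
qed

lemma ES_entry: fixes M :: "real^'n^'n" shows "ES M u $ i $ j = (\<Sum>k. (matpow M k $ i $ j / fact k) * u ^ k)"
proof -
  have bl: "bounded_linear (\<lambda>X::real^'n^'n. X $ i $ j)"
    using bounded_linear_compose[OF bounded_linear_vec_nth bounded_linear_vec_nth] .
  have "ES M u $ i $ j = (\<Sum>k. ((u ^ k / fact k) *\<^sub>R matpow M k) $ i $ j)"
    unfolding ES_def by (rule bounded_linear.suminf[OF bl ES_summable])
  then show ?thesis by (simp add: mult.commute)
qed

lemma ES_entry_summable: "summable (\<lambda>k. (matpow (M::real^'n^'n) k $ i $ j / fact k) * u ^ k)"
proof -
  have bl: "bounded_linear (\<lambda>X::real^'n^'n. X $ i $ j)"
    using bounded_linear_compose[OF bounded_linear_vec_nth bounded_linear_vec_nth] .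
  have "summable (\<lambda>k. ((u ^ k / fact k) *\<^sub>R matpow M k) $ i $ j)"
    by (rule bounded_linear.summable[OF bl ES_summable])
  then show ?thesis by (simp add: mult.commute)
qed

lemma ES_deriv: fixes M :: "real^'n^'n" shows "(ES M has_vector_derivative (M ** ES M u)) (at u within S)"
proof (rule has_vector_derivative_mat_components)
  fix i j
  have bl: "bounded_linear (\<lambda>X::real^'n^'n. X $ i $ j)"
    using bounded_linear_compose[OF bounded_linear_vec_nth bounded_linear_vec_nth] .
  let ?c = "\<lambda>k. matpow M k $ i $ j / fact k"
  have d: "((\<lambda>u. \<Sum>k. ?c k * u ^ k) has_real_derivative (\<Sum>k. diffs ?c k * u ^ k)) (at u)"
    by (rule termdiffs_strong_converges_everywhere) (rule ES_entry_summable)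
  have "(\<Sum>k. diffs ?c k * u ^ k) = (\<Sum>k. ((u ^ k / fact k) *\<^sub>R (M ** matpow M k)) $ i $ j)"
  proof (intro arg_cong[where f=suminf] ext)
    fix k
    have "fact (Suc k) = real (Suc k) * (fact k :: real)" by (rule fact_Suc)
    moreover have "real (Suc k) \<noteq> 0" "(fact k :: real) \<noteq> 0" by auto
    ultimately show "diffs ?c k * u ^ k = ((u ^ k / fact k) *\<^sub>R (M ** matpow M k)) $ i $ j"
      by (simp add: diffs_def del: of_nat_Suc fact_Suc)
  qed
  also have "\<dots> = (\<Sum>k. (M ** ((u ^ k / fact k) *\<^sub>R matpow M k)) $ i $ j)"
    by (simp add: matrix_scalar_ac scalar_matrix_assoc[symmetric])
  also have "\<dots> = (\<Sum>k. M ** ((u ^ k / fact k) *\<^sub>R matpow M k)) $ i $ j"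
    by (rule bounded_linear.suminf[OF bl, symmetric])
       (rule bounded_linear.summable[OF bounded_linear_matmul_left ES_summable])
  also have "\<dots> = (M ** ES M u) $ i $ j"
    unfolding ES_def by (simp add: bounded_linear.suminf[OF bounded_linear_matmul_left ES_summable])
  finally have "((\<lambda>u. ES M u $ i $ j) has_real_derivative (M ** ES M u) $ i $ j) (at u)"
    using d by (simp add: ES_entry)
  then show "((\<lambda>u. ES M u $ i $ j) has_real_derivative (M ** ES M u) $ i $ j) (at u within S)"
    by (rule has_field_derivative_at_within)
qed


context
  fixes \<nu> :: "real^'n \<Rightarrow> real"
  assumes nu: "is_vector_norm \<nu>"
begin

lemma nu_nonneg: "0 \<le> \<nu> x" using nu unfolding is_vector_norm_def by auto
lemma nu_zero_iff: "\<nu> x = 0 \<longleftrightarrow> x = 0" using nu unfolding is_vector_norm_def by auto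
lemma nu_scale: "\<nu> (c *\<^sub>R x) = \<bar>c\<bar> * \<nu> x" using nu unfolding is_vector_norm_def by auto
lemma nu_tri: "\<nu> (x + y) \<le> \<nu> x + \<nu> y" using nu unfolding is_vector_norm_def by auto
lemma nu_0[simp]: "\<nu> 0 = 0" using nu_zero_iff by simp
lemma nu_minus: "\<nu> (- x) = \<nu> x" using nu_scale[of "-1" x] by simp
lemma nu_diff_tri: "\<nu> x - \<nu> y \<le> \<nu> (x - y)"
  using nu_tri[of "x - y" y] by simp

lemma nu_sum: "finite F \<Longrightarrow> \<nu> (sum f F) \<le> (\<Sum>i\<in>F. \<nu> (f i))"
proof (induction F rule: finite_induct)
  case empty then show ?case by simp
next
  case (insert a F)
  then show ?case using nu_tri[of "f a" "sum f F"] by simp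
qed

definition "Lnu = (\<Sum>i\<in>UNIV. \<nu> (axis i 1))"

lemma Lnu_nonneg: "0 \<le> Lnu" unfolding Lnu_def by (intro sum_nonneg nu_nonneg)

lemma nu_upper: "\<nu> x \<le> Lnu * norm x"
proof -
  have "x = (\<Sum>i\<in>UNIV. (x $ i) *\<^sub>R axis i 1)"
    using basis_expansion[of x] by (simp add: scalar_mult_eq_scaleR)
  then have "\<nu> x = \<nu> (\<Sum>i\<in>UNIV. (x $ i) *\<^sub>R axis i 1)" by simp
  also have "\<dots> \<le> (\<Sum>i\<in>UNIV. \<nu> ((x $ i) *\<^sub>R axis i 1))" by (rule nu_sum) simp
  also have "\<dots> = (\<Sum>i\<in>UNIV. \<bar>x $ i\<bar> * \<nu> (axis i 1))" by (simp add: nu_scale)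
  also have "\<dots> \<le> (\<Sum>i\<in>UNIV. norm x * \<nu> (axis i 1))"
    by (intro sum_mono mult_right_mono nu_nonneg component_le_norm_cart)
  also have "\<dots> = Lnu * norm x" by (simp add: Lnu_def sum_distrib_left mult.commute)
  finally show ?thesis .
qed

lemma nu_cont: "continuous_on S \<nu>"
proof (rule lipschitz_on_continuous_on)
  show "Lnu-lipschitz_on S \<nu>"
  proof (rule lipschitz_onI)
    fix x y
    have "\<nu> x - \<nu> y \<le> Lnu * norm (x - y)" using nu_diff_tri[of x y] nu_upper[of "x - y"] by simp
    moreover have "\<nu> y - \<nu> x \<le> Lnu * norm (x - y)" using nu_diff_tri[of y x] nu_upper[of "y - x"]
      by (simp add: norm_minus_commute)
    ultimately show "dist (\<nu> x) (\<nu> y) \<le> Lnu * dist x y" by (simp add: dist_real_def dist_norm abs_le_iff)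
  qed (rule Lnu_nonneg)
qed

lemma nu_lower: "\<exists>m>0. \<forall>x. m * norm x \<le> \<nu> x"
proof -
  obtain i :: 'n where True by simp
  have ne: "sphere (0::real^'n) 1 \<noteq> {}"
    using norm_axis_1[of i] by (auto simp: sphere_def dist_norm intro!: exI[of _ "axis i 1"])
  obtain z where z: "z \<in> sphere 0 1" and zmin: "\<forall>y\<in>sphere 0 1. \<nu> z \<le> \<nu> y"
    using continuous_attains_inf[OF compact_sphere ne nu_cont] by blast
  have "z \<noteq> 0" using z by auto
  then have mpos: "\<nu> z > 0" using nu_nonneg[of z] nu_zero_iff[of z] by auto
  have "\<nu> z * norm x \<le> \<nu> x" for x
  proof (cases "x = 0")
    case False
    then have "(1 / norm x) *\<^sub>R x \<in> sphere 0 1" by (simp add: sphere_def dist_norm)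
    then have "\<nu> z \<le> \<nu> ((1 / norm x) *\<^sub>R x)" using zmin by blast
    also have "\<dots> = \<nu> x / norm x" by (simp add: nu_scale)
    finally show ?thesis using False by (simp add: field_simps)
  qed simp
  then show ?thesis using mpos by blast
qed

lemma nu_convex: "convex {x. \<nu> x \<le> r}"
proof (rule convexI)
  fix x y and u v :: real
  assume "x \<in> {x. \<nu> x \<le> r}" "y \<in> {x. \<nu> x \<le> r}" "0 \<le> u" "0 \<le> v" "u + v = 1"
  then have "\<nu> (u *\<^sub>R x + v *\<^sub>R y) \<le> u * \<nu> x + v * \<nu> y"
    using nu_tri[of "u *\<^sub>R x" "v *\<^sub>R y"] nu_scale[of u x] nu_scale[of v y] by simp
  also have "\<dots> \<le> u * r + v * r"
    using \<open>x \<in> _\<close> \<open>y \<in> _\<close> \<open>0 \<le> u\<close> \<open>0 \<le> v\<close> by (intro add_mono mult_left_mono) auto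
  also have "\<dots> = r" using \<open>u + v = 1\<close> by (metis distrib_right mult_1)
  finally show "u *\<^sub>R x + v *\<^sub>R y \<in> {x. \<nu> x \<le> r}" by simp
qed

lemma nu_closed: "closed {x. \<nu> x \<le> r}"
  by (rule closed_Collect_le[OF nu_cont[of UNIV] continuous_on_const])

lemma nu_functional:
  assumes "r < \<nu> x0"
  shows "\<exists>w. (\<forall>v. w \<bullet> v \<le> \<nu> v) \<and> r < w \<bullet> x0"
proof (cases "\<nu> x0 = 0")
  case True
  then show ?thesis using assms nu_nonneg by (intro exI[of _ 0]) auto
next
  case False
  then have c: "\<nu> x0 > 0" using nu_nonneg[of x0] by auto
  define \<rho> where "\<rho> = (max r 0 + \<nu> x0) / 2"
  have rho: "\<rho> > 0" "\<rho> > r" "\<rho> < \<nu> x0" using c assms unfolding \<rho>_def by auto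
  have "x0 \<notin> {x. \<nu> x \<le> \<rho>}" using rho by auto
  then obtain a b where ab: "a \<bullet> x0 < b" "\<forall>x\<in>{x. \<nu> x \<le> \<rho>}. a \<bullet> x > b"
    using separating_hyperplane_closed_point[OF nu_convex nu_closed] by blast
  have bneg: "b < 0" using ab(2)[rule_format, of 0] rho by simp
  define w where "w = (\<rho> / (- b)) *\<^sub>R (- a)"
  have "w \<bullet> v \<le> \<nu> v" for v
  proof (cases "v = 0")
    case False
    then have nv: "\<nu> v > 0" using nu_nonneg[of v] nu_zero_iff[of v] by auto
    have "(\<rho> / \<nu> v) *\<^sub>R v \<in> {x. \<nu> x \<le> \<rho>}" using nv rho by (simp add: nu_scale)
    then have "a \<bullet> ((\<rho> / \<nu> v) *\<^sub>R v) > b" using ab(2) by blast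
    then have "(\<rho> / \<nu> v) * (a \<bullet> v) > b" by simp
    then have "\<rho> * (a \<bullet> v) > b * \<nu> v" using nv by (simp add: field_simps)
    then show ?thesis unfolding w_def using bneg by (simp add: field_simps)
  qed (simp add: w_def)
  moreover have "r < w \<bullet> x0"
  proof -
    have "w \<bullet> x0 = \<rho> * (a \<bullet> x0) / b" unfolding w_def using bneg by (simp add: field_simps)
    also have "\<dots> > \<rho> * b / b" using ab(1) bneg rho by (intro divide_strict_right_mono_neg mult_strict_left_mono) auto
    finally show ?thesis using bneg rho by simp
  qed
  ultimately show ?thesis by blast
qed

lemma induced_bdd:
  fixes M :: "real^'n^'n"
  shows "bdd_above ((\<lambda>x. \<nu> (M *v x) / \<nu> x) ` {x. x \<noteq> 0})"
proof -
  obtain m where m: "m > 0" "\<forall>x. m * norm x \<le> \<nu> x" using nu_lower by blast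
  have "\<nu> (M *v x) / \<nu> x \<le> Lnu * onorm ((*v) M) / m" if "x \<noteq> 0" for x
  proof -
    have nx: "\<nu> x > 0" using that nu_nonneg[of x] nu_zero_iff[of x] by auto
    have "\<nu> (M *v x) \<le> Lnu * norm (M *v x)" by (rule nu_upper)
    also have "\<dots> \<le> Lnu * (onorm ((*v) M) * norm x)"
      by (intro mult_left_mono Lnu_nonneg onorm) simp
    also have "\<dots> \<le> Lnu * (onorm ((*v) M) * (\<nu> x / m))"
    proof -
      have "norm x \<le> \<nu> x / m" using m by (simp add: le_divide_eq mult.commute)
      then show ?thesis
        by (intro mult_left_mono Lnu_nonneg onorm_pos_le) (auto intro: matrix_vector_mul_bounded_linear)
    qed
    finally have "\<nu> (M *v x) \<le> (Lnu * onorm ((*v) M) / m) * \<nu> x" by simp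
    then show ?thesis using nx by (simp add: divide_le_eq)
  qed
  then show ?thesis by (intro bdd_aboveI[of _ "Lnu * onorm ((*v) M) / m"]) auto
qed

lemma induced_le:
  fixes M :: "real^'n^'n"
  shows "\<nu> (M *v x) \<le> induced_norm \<nu> M * \<nu> x"
proof (cases "x = 0")
  case False
  have nx: "\<nu> x > 0" using False nu_nonneg[of x] nu_zero_iff[of x] by auto
  have "\<nu> (M *v x) / \<nu> x \<le> induced_norm \<nu> M"
    unfolding induced_norm_def by (rule cSUP_upper[OF _ induced_bdd[of M]]) (use False in auto)
  then show ?thesis using nx by (simp add: field_simps)
qed simp

lemma induced_nonneg:
  fixes M :: "real^'n^'n"
  shows "0 \<le> induced_norm \<nu> M"
proof -
  obtain i :: 'n where True by simp
  have ax: "axis i (1::real) \<noteq> 0" by (simp add: axis_eq_0_iff)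
  have "0 \<le> \<nu> (M *v axis i 1) / \<nu> (axis i 1)" by (intro divide_nonneg_nonneg nu_nonneg)
  also have "\<dots> \<le> induced_norm \<nu> M"
    unfolding induced_norm_def by (rule cSUP_upper[OF _ induced_bdd[of M]]) (use ax in auto)
  finally show ?thesis .
qed

end


lemma Maclaurin_lemma2_within:
  fixes B
  assumes DERIV: "\<forall>m t. m < n \<and> 0\<le>t \<and> t\<le>h \<longrightarrow> (diff m has_real_derivative diff (Suc m) t) (at t within {0..h})"
    and INIT: "n = Suc k"
  defines "difg \<equiv>
    (\<lambda>m t::real. diff m t -
      ((\<Sum>p<n - m. diff (m + p) 0 / fact p * t ^ p) + B * (t ^ (n - m) / fact (n - m))))"
  shows "\<forall>m t. m < n \<and> 0 \<le> t \<and> t \<le> h \<longrightarrow> (difg m has_real_derivative difg (Suc m) t) (at t within {0..h})"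
proof (rule allI impI)+
  fix m t
  assume INIT2: "m < n \<and> 0 \<le> t \<and> t \<le> h"
  have "(difg m has_real_derivative diff (Suc m) t -
    ((\<Sum>x<n - m. real x * t ^ (x - Suc 0) * diff (m + x) 0 / fact x) +
     real (n - m) * t ^ (n - Suc m) * B / fact (n - m))) (at t within {0..h})"
    by (auto simp: difg_def intro!: derivative_eq_intros DERIV[rule_format, OF INIT2])
  moreover
  from INIT2 have intvl: "{..<n - m} = insert 0 (Suc ` {..<n - Suc m})" and "0 < n - m"
    unfolding atLeast0LessThan[symmetric] by auto
  have "(\<Sum>x<n - m. real x * t ^ (x - Suc 0) * diff (m + x) 0 / fact x) =
      (\<Sum>x<n - Suc m. real (Suc x) * t ^ x * diff (Suc m + x) 0 / fact (Suc x))"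
    unfolding intvl by (subst sum.insert) (auto simp: sum.reindex)
  moreover
  have "\<And>x. (Suc x) * t ^ x * diff (Suc m + x) 0 / fact (Suc x) = diff (Suc m + x) 0 * t^x / fact x"
    by (rule nonzero_divide_eq_eq[THEN iffD2]) auto
  moreover
  have "(n - m) * t ^ (n - Suc m) * B / fact (n - m) = B * (t ^ (n - Suc m) / fact (n - Suc m))"
    using \<open>0 < n - m\<close> by (simp add: field_split_simps fact_reduce)
  ultimately show "(difg m has_real_derivative difg (Suc m) t) (at t within {0..h})"
    unfolding difg_def  by (simp add: mult.commute)
qed

lemma Maclaurin_within:
  assumes h: "0 < h"
    and n: "0 < n"
    and diff_0: "diff 0 = f"
    and diff_Suc: "\<forall>m t. m < n \<and> 0 \<le> t \<and> t \<le> h \<longrightarrow> (diff m has_real_derivative diff (Suc m) t) (at t within {0..h})"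
  shows
    "\<exists>t::real. 0 < t \<and> t < h \<and>
      f h = sum (\<lambda>m. (diff m 0 / fact m) * h ^ m) {..<n} + (diff n t / fact n) * h ^ n"
proof -
  from n obtain m where m: "n = Suc m"
    by (cases n) (simp add: n)
  from m have "m < n" by simp

  obtain B where f_h: "f h = (\<Sum>m<n. diff m 0 / fact m * h ^ m) + B * (h ^ n / fact n)"
    using Maclaurin_lemma [OF h] ..

  define g where [abs_def]: "g t =
    f t - (sum (\<lambda>m. (diff m 0 / fact m) * t^m) {..<n} + B * (t^n / fact n))" for t
  have g2: "g 0 = 0" "g h = 0"
    by (simp_all add: m f_h g_def lessThan_Suc_eq_insert_0 image_iff diff_0 sum.reindex)

  define difg where [abs_def]: "difg m t =
    diff m t - (sum (\<lambda>p. (diff (m + p) 0 / fact p) * (t ^ p)) {..<n-m} +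
      B * ((t ^ (n - m)) / fact (n - m)))" for m t
  have difg_0: "difg 0 = g"
    by (simp add: difg_def g_def diff_0)
  have difg_Suc: "\<forall>m t. m < n \<and> 0 \<le> t \<and> t \<le> h \<longrightarrow> (difg m has_real_derivative difg (Suc m) t) (at t within {0..h})"
    using diff_Suc m unfolding difg_def [abs_def] by (rule Maclaurin_lemma2_within)
  have difg_eq_0: "\<forall>m<n. difg m 0 = 0"
    by (auto simp: difg_def m Suc_diff_le lessThan_Suc_eq_insert_0 image_iff sum.reindex)
  have cont_difg: "\<And>m. m < n \<Longrightarrow> continuous_on {0..h} (difg m)"
    by (rule DERIV_continuous_on) (use difg_Suc in auto)
  have difg_at: "\<And>m x. m < n \<Longrightarrow> 0 < x \<Longrightarrow> x < h \<Longrightarrow> (difg m has_real_derivative difg (Suc m) x) (at x)"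
    using difg_Suc at_within_Icc_at by (metis less_eq_real_def)
  have differentiable_difg: "\<And>m x. m < n \<Longrightarrow> 0 < x \<Longrightarrow> x < h \<Longrightarrow> difg m differentiable (at x)"
    using difg_at real_differentiable_def by blast
  have difg_Suc_eq_0:
    "\<And>m t. m < n \<Longrightarrow> 0 < t \<Longrightarrow> t < h \<Longrightarrow> DERIV (difg m) t :> 0 \<Longrightarrow> difg (Suc m) t = 0"
    by (rule DERIV_unique [OF difg_at]) simp_all

  have "\<exists>t. 0 < t \<and> t < h \<and> DERIV (difg m) t :> 0"
  using \<open>m < n\<close>
  proof (induct m)
    case 0
    show ?case
    proof (rule Rolle)
      show "0 < h" by fact
      show "difg 0 0 = difg 0 h"
        by (simp add: difg_0 g2)
      show "continuous_on {0..h} (difg 0)"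
        by (simp add: cont_difg n)
    qed (simp add: differentiable_difg n)
  next
    case (Suc m')
    then obtain t where t: "0 < t" "t < h" "DERIV (difg m') t :> 0"
      by force
    have "\<exists>t'. 0 < t' \<and> t' < t \<and> DERIV (difg (Suc m')) t' :> 0"
    proof (rule Rolle)
      show "0 < t" by fact
      show "difg (Suc m') 0 = difg (Suc m') t"
        using t \<open>Suc m' < n\<close> by (simp add: difg_Suc_eq_0 difg_eq_0)
      show "continuous_on {0..t} (difg (Suc m'))"
        using cont_difg[OF \<open>Suc m' < n\<close>] by (rule continuous_on_subset) (use \<open>t < h\<close> in auto)
    qed (use \<open>t < h\<close> \<open>Suc m' < n\<close> in \<open>simp add: differentiable_difg\<close>)
    with \<open>t < h\<close> show ?case
      by auto
  qed
  then obtain t where "0 < t" "t < h" "difg (Suc m) t = 0"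
    using \<open>m < n\<close> difg_Suc_eq_0 by force
  show ?thesis
  proof (intro exI conjI)
    show "0 < t" "t < h" by fact+
    show "f h = (\<Sum>m<n. diff m 0 / (fact m) * h ^ m) + diff n t / (fact n) * h ^ n"
      using \<open>difg (Suc m) t = 0\<close> by (simp add: m f_h difg_def)
  qed
qed

lemma Maclaurin_within':
  assumes h: "0 < h"
    and n: "0 < n"
    and diff_Suc: "\<forall>m t. m < n \<and> 0 \<le> t \<and> t \<le> h \<longrightarrow> (diff m has_real_derivative diff (Suc m) t) (at t within {0..h})"
  shows
    "\<exists>t::real. 0 < t \<and> t < h \<and>
      diff 0 h = sum (\<lambda>m. (diff m 0 / fact m) * h ^ m) {..<n} + (diff n t / fact n) * h ^ n"
  using Maclaurin_within[OF h n refl diff_Suc] .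

lemma Taylor_up_within:
  assumes h: "0 < h" and n: "0 < n"
    and D: "\<forall>m t. m < n \<and> c \<le> t \<and> t \<le> c + h \<longrightarrow> (diff m has_real_derivative diff (Suc m) t) (at t within {c..c+h})"
  shows "\<exists>t. c < t \<and> t < c + h \<and> diff 0 (c + h) = (\<Sum>m<n. diff m c / fact m * h ^ m) + diff n t / fact n * h ^ n"
proof -
  have D': "\<forall>m t. m < n \<and> 0 \<le> t \<and> t \<le> h \<longrightarrow> ((\<lambda>s. diff m (c + s)) has_real_derivative diff (Suc m) (c + t)) (at t within {0..h})"
  proof (intro allI impI)
    fix m t assume a: "m < n \<and> 0 \<le> t \<and> t \<le> h"
    have img: "(\<lambda>s. c + s) ` {0..h} = {c..c+h}"
    proof
      show "(\<lambda>s. c + s) ` {0..h} \<subseteq> {c..c+h}" by auto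
      show "{c..c+h} \<subseteq> (\<lambda>s. c + s) ` {0..h}"
      proof
        fix x assume "x \<in> {c..c+h}"
        then show "x \<in> (\<lambda>s. c + s) ` {0..h}" by (intro image_eqI[of _ _ "x - c"]) auto
      qed
    qed
    have "(diff m has_real_derivative diff (Suc m) (c + t)) (at (c + t) within (\<lambda>s. c + s) ` {0..h})"
      unfolding img
      apply (rule D[rule_format])
      using a apply simp
      done
    moreover have "((\<lambda>s. c + s) has_real_derivative 0 + 1) (at t within {0..h})"
      by (intro DERIV_add DERIV_const DERIV_ident)
    ultimately have "(diff m \<circ> (\<lambda>s. c + s) has_real_derivative diff (Suc m) (c + t) * (0 + 1)) (at t within {0..h})"
      by (rule DERIV_image_chain)
    then show "((\<lambda>s. diff m (c + s)) has_real_derivative diff (Suc m) (c + t)) (at t within {0..h})"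
      by (simp add: o_def)
  qed
  obtain t where t: "0 < t \<and> t < h \<and> diff 0 (c + h) = (\<Sum>m<n. diff m (c + 0) / fact m * h ^ m) + diff n (c + t) / fact n * h ^ n"
    using Maclaurin_within'[of h n "\<lambda>m s. diff m (c + s)", OF h n D'] ..
  then show ?thesis by (intro exI[of _ "c + t"]) simp
qed

lemma neg1_pow_aux: "(-1::real)^m * (x * - 1) = (-1)^Suc m * x"
  by (simp only: power_Suc mult_minus1_right mult_minus1 mult_minus_left mult_minus_right)

lemma Taylor_down_within:
  assumes h: "0 < h" and n: "0 < n"
    and D: "\<forall>m t. m < n \<and> c - h \<le> t \<and> t \<le> c \<longrightarrow> (diff m has_real_derivative diff (Suc m) t) (at t within {c-h..c})"
  shows "\<exists>t. c - h < t \<and> t < c \<and> diff 0 (c - h) = (\<Sum>m<n. diff m c / fact m * (- h) ^ m) + diff n t / fact n * (- h) ^ n"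
proof -
  have D': "\<forall>m t. m < n \<and> 0 \<le> t \<and> t \<le> h \<longrightarrow> ((\<lambda>s. (-1) ^ m * diff m (c - s)) has_real_derivative (-1) ^ Suc m * diff (Suc m) (c - t)) (at t within {0..h})"
  proof (intro allI impI)
    fix m t assume a: "m < n \<and> 0 \<le> t \<and> t \<le> h"
    have img: "(\<lambda>s. c - s) ` {0..h} = {c-h..c}"
    proof
      show "(\<lambda>s. c - s) ` {0..h} \<subseteq> {c-h..c}" by auto
      show "{c-h..c} \<subseteq> (\<lambda>s. c - s) ` {0..h}"
      proof
        fix x assume "x \<in> {c-h..c}"
        then show "x \<in> (\<lambda>s. c - s) ` {0..h}" by (intro image_eqI[of _ _ "c - x"]) auto
      qed
    qed
    have "(diff m has_real_derivative diff (Suc m) (c - t)) (at (c - t) within (\<lambda>s. c - s) ` {0..h})"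
      unfolding img
      apply (rule D[rule_format])
      using a h apply simp
      done
    moreover have "((\<lambda>s. c - s) has_real_derivative 0 - 1) (at t within {0..h})"
      by (intro DERIV_diff DERIV_const DERIV_ident)
    ultimately have "(diff m \<circ> (\<lambda>s. c - s) has_real_derivative diff (Suc m) (c - t) * (0 - 1)) (at t within {0..h})"
      by (rule DERIV_image_chain)
    then have "((\<lambda>s. diff m (c - s)) has_real_derivative diff (Suc m) (c - t) * -1) (at t within {0..h})"
      by (simp add: o_def)
    then have "((\<lambda>s. (-1) ^ m * diff m (c - s)) has_real_derivative (-1) ^ m * (diff (Suc m) (c - t) * -1)) (at t within {0..h})"
      by (rule DERIV_cmult)
    then show "((\<lambda>s. (-1) ^ m * diff m (c - s)) has_real_derivative (-1) ^ Suc m * diff (Suc m) (c - t)) (at t within {0..h})"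
      using neg1_pow_aux[of m "diff (Suc m) (c - t)"] by (rule back_subst)
  qed
  obtain t where t0: "0 < t \<and> t < h \<and> (-1) ^ 0 * diff 0 (c - h) = (\<Sum>m<n. (-1) ^ m * diff m (c - 0) / fact m * h ^ m) + (-1) ^ n * diff n (c - t) / fact n * h ^ n"
    using Maclaurin_within'[of h n "\<lambda>m s. (-1) ^ m * diff m (c - s)", OF h n D'] ..
  note t = conjunct1[OF t0] conjunct1[OF conjunct2[OF t0]] conjunct2[OF conjunct2[OF t0]]
  have "(\<Sum>m<n. (-1) ^ m * diff m (c - 0) / fact m * h ^ m) = (\<Sum>m<n. diff m c / fact m * (- h) ^ m)"
    by (intro sum.cong refl) (simp add: power_minus[of h])
  moreover have "(-1) ^ n * diff n (c - t) / fact n * h ^ n = diff n (c - t) / fact n * (- h) ^ n"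
    by (simp add: power_minus[of h])
  ultimately show ?thesis using t by (intro exI[of _ "c - t"]) simp
qed


lemma bb_mv: "bounded_bilinear (\<lambda>(M::real^'n^'m) (v::real^'n). M *v v)"
  unfolding bilinear_conv_bounded_bilinear[symmetric] bilinear_def
proof (intro conjI allI)
  fix M :: "real^'n^'m" show "linear (\<lambda>v. M *v v)" by (rule matrix_vector_mul_linear)
next
  fix v :: "real^'n" show "linear (\<lambda>M::real^'n^'m. M *v v)"
    by (rule linearI) (auto simp: matrix_vector_mult_add_rdistrib scaleR_matrix_vector_assoc)
qed

lemma vec_nth_deriv: "(f has_vector_derivative f') F \<Longrightarrow> ((\<lambda>x. f x $ i) has_real_derivative f' $ i) F"
  unfolding has_real_derivative_iff_has_vector_derivative
  by (rule bounded_linear.has_vector_derivative[OF bounded_linear_vec_nth])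

lemma avg_IVT:
  fixes g :: "real \<Rightarrow> real"
  assumes cont: "continuous_on {a..b} g" and p: "p \<in> {a..b}" and q: "q \<in> {a..b}"
  shows "\<exists>\<eta>\<in>{a..b}. g \<eta> = (g p + g q) / 2"
proof -
  have main: "\<exists>\<eta>\<in>{a..b}. g \<eta> = (g p + g q) / 2" if pq: "p \<le> q" "p \<in> {a..b}" "q \<in> {a..b}" for p q
  proof -
    have c: "continuous_on {p..q} g" using cont by (rule continuous_on_subset) (use pq in auto)
    show ?thesis
    proof (cases "g p \<le> g q")
      case True
      then obtain x where "p \<le> x" "x \<le> q" "g x = (g p + g q) / 2"
        using IVT'[of g p "(g p + g q) / 2" q, OF _ _ pq(1) c] by auto
      then show ?thesis using pq by (intro bexI[of _ x]) auto
    next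
      case False
      then obtain x where "p \<le> x" "x \<le> q" "g x = (g p + g q) / 2"
        using IVT2'[of g q "(g p + g q) / 2" p, OF _ _ pq(1) c] by auto
      then show ?thesis using pq by (intro bexI[of _ x]) auto
    qed
  qed
  show ?thesis
  proof (cases "p \<le> q")
    case True then show ?thesis using main p q by blast
  next
    case False then show ?thesis using main[of q p] p q by (auto simp: add.commute)
  qed
qed


lemma part1_comp:
  fixes Y0 Y1 Y2 Y3 Y4 :: "real \<Rightarrow> real^'n" and I :: "real set" and c \<tau> \<epsilon> x R :: real and i :: 'n
  assumes tau: "\<tau> > 0" and eps: "\<epsilon> > 0" and II: "{c-\<tau>..c+\<tau>} \<subseteq> I"
    and Y01: "\<And>s. s \<in> I \<Longrightarrow> (Y0 has_vector_derivative Y1 s) (at s within I)"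
    and Y12: "\<And>s. s \<in> I \<Longrightarrow> (Y1 has_vector_derivative Y2 s) (at s within I)"
    and Y23: "\<And>s. s \<in> I \<Longrightarrow> (Y2 has_vector_derivative Y3 s) (at s within I)"
    and Y34: "\<And>s. s \<in> I \<Longrightarrow> (Y3 has_vector_derivative Y4 s) (at s within I)"
    and Y4_cont: "continuous_on I Y4"
    and ode: "Y1 c $ i + \<epsilon> * Y2 c $ i = R"
    and hm: "(1 / (2 * \<tau>)) * (x - Y0 (c - \<tau>) $ i) + (\<epsilon> / \<tau>^2) * (x - 2 * Y0 c $ i + Y0 (c - \<tau>) $ i) = R"
  shows "\<exists>a b. (\<exists>\<eta>\<in>{c-\<tau>..c+\<tau>}. a = 1/6 * Y3 \<eta> $ i) \<and> (\<exists>\<eta>\<in>{c-\<tau>..c+\<tau>}. b = 1/12 * Y4 \<eta> $ i) \<and>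
           Y0 (c + \<tau>) $ i - x = 2 * \<tau>^4 / (\<tau> + 2 * \<epsilon>) * a + 2 * \<tau>^4 * \<epsilon> / (\<tau> + 2 * \<epsilon>) * b"
proof -
  define Df where "Df k s = (if k = 0 then Y0 s $ i else if k = 1 then Y1 s $ i else if k = 2 then Y2 s $ i else if k = 3 then Y3 s $ i else Y4 s $ i)" for k :: nat and s
  have Df0: "Df 0 = (\<lambda>s. Y0 s $ i)" and Df1: "Df 1 = (\<lambda>s. Y1 s $ i)" and Df2: "Df 2 = (\<lambda>s. Y2 s $ i)"
    and Df3: "Df 3 = (\<lambda>s. Y3 s $ i)" and Df4: "Df 4 = (\<lambda>s. Y4 s $ i)"
    by (auto simp: Df_def fun_eq_iff)
  have Df1': "Df (Suc 0) = (\<lambda>s. Y1 s $ i)" and Df2': "Df (Suc (Suc 0)) = (\<lambda>s. Y2 s $ i)"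
    and Df3': "Df (Suc (Suc (Suc 0))) = (\<lambda>s. Y3 s $ i)"
    by (auto simp: Df_def fun_eq_iff)
  have Dall: "(Df m has_real_derivative Df (Suc m) s) (at s within I)" if "m < 4" "s \<in> I" for m s
  proof -
    from that(1) have "m = 0 \<or> m = 1 \<or> m = 2 \<or> m = 3" by auto
    then show ?thesis
    proof (elim disjE)
      assume "m = 0" then show ?thesis using vec_nth_deriv[OF Y01[OF that(2)], of i] by (simp add: Df0 Df1 Df2 Df3 Df4 Df1' Df2' Df3' Df_def)
    next
      assume "m = 1" then show ?thesis using vec_nth_deriv[OF Y12[OF that(2)], of i] by (simp add: Df0 Df1 Df2 Df3 Df4 Df1' Df2' Df3' Df_def)
    next
      assume "m = 2" then show ?thesis using vec_nth_deriv[OF Y23[OF that(2)], of i] by (simp add: Df0 Df1 Df2 Df3 Df4 Df1' Df2' Df3' Df_def)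
    next
      assume "m = 3" then show ?thesis using vec_nth_deriv[OF Y34[OF that(2)], of i] by (simp add: Df0 Df1 Df2 Df3 Df4 Df1' Df2' Df3' Df_def)
    qed
  qed
  have Dsub: "\<forall>m t. m < N \<and> l \<le> t \<and> t \<le> u \<longrightarrow> (Df m has_real_derivative Df (Suc m) t) (at t within {l..u})"
    if "N \<le> 4" "{l..u} \<subseteq> I" for N l u
  proof (intro allI impI)
    fix m t assume a: "m < N \<and> l \<le> t \<and> t \<le> u"
    then have "t \<in> I" using that(2) by auto
    then show "(Df m has_real_derivative Df (Suc m) t) (at t within {l..u})"
      using Dall[of m t] a that by (auto intro: DERIV_subset)
  qed
  have sub_up: "{c..c+\<tau>} \<subseteq> I" and sub_dn: "{c-\<tau>..c} \<subseteq> I" using II tau by auto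
  obtain \<xi>1 where x1: "c < \<xi>1" "\<xi>1 < c + \<tau>" and u3: "Df 0 (c + \<tau>) = (\<Sum>m<3. Df m c / fact m * \<tau> ^ m) + Df 3 \<xi>1 / fact 3 * \<tau> ^ 3"
    using Taylor_up_within[OF tau _ Dsub[OF _ sub_up], of 3] by auto
  obtain \<xi>2 where x2: "c - \<tau> < \<xi>2" "\<xi>2 < c" and d3: "Df 0 (c - \<tau>) = (\<Sum>m<3. Df m c / fact m * (- \<tau>) ^ m) + Df 3 \<xi>2 / fact 3 * (- \<tau>) ^ 3"
    using Taylor_down_within[OF tau _ Dsub[OF _ sub_dn], of 3] by auto
  obtain \<xi>3 where x3: "c < \<xi>3" "\<xi>3 < c + \<tau>" and u4: "Df 0 (c + \<tau>) = (\<Sum>m<4. Df m c / fact m * \<tau> ^ m) + Df 4 \<xi>3 / fact 4 * \<tau> ^ 4"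
    using Taylor_up_within[OF tau _ Dsub[OF _ sub_up], of 4] by auto
  obtain \<xi>4 where x4: "c - \<tau> < \<xi>4" "\<xi>4 < c" and d4: "Df 0 (c - \<tau>) = (\<Sum>m<4. Df m c / fact m * (- \<tau>) ^ m) + Df 4 \<xi>4 / fact 4 * (- \<tau>) ^ 4"
    using Taylor_down_within[OF tau _ Dsub[OF _ sub_dn], of 4] by auto
  define T where "T = Y0 (c + \<tau>) $ i"
  define P where "P = Y0 (c - \<tau>) $ i"
  define Y where "Y = Y0 c $ i"
  define V1 where "V1 = Y1 c $ i"
  define V2 where "V2 = Y2 c $ i"
  define V3 where "V3 = Y3 c $ i"
  define W1 where "W1 = Y3 \<xi>1 $ i"
  define W2 where "W2 = Y3 \<xi>2 $ i"
  define Z1 where "Z1 = Y4 \<xi>3 $ i"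
  define Z2 where "Z2 = Y4 \<xi>4 $ i"
  have fact3: "fact 3 = (6::real)" by (simp add: eval_nat_numeral)
  have fact4: "fact 4 = (24::real)" by (simp add: eval_nat_numeral)
  have u3': "T = Y + V1 * \<tau> + V2 / 2 * \<tau>^2 + W1 / 6 * \<tau>^3"
    using u3 unfolding T_def Y_def V1_def V2_def W1_def fact3 by (simp add: Df_def eval_nat_numeral)
  have d3': "P = Y - V1 * \<tau> + V2 / 2 * \<tau>^2 - W2 / 6 * \<tau>^3"
    using d3 unfolding P_def Y_def V1_def V2_def W2_def fact3 by (simp add: Df_def eval_nat_numeral)
  have u4': "T = Y + V1 * \<tau> + V2 / 2 * \<tau>^2 + V3 / 6 * \<tau>^3 + Z1 / 24 * \<tau>^4"
    using u4 unfolding T_def Y_def V1_def V2_def V3_def Z1_def fact4 by (simp add: Df_def eval_nat_numeral)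
  have d4': "P = Y - V1 * \<tau> + V2 / 2 * \<tau>^2 - V3 / 6 * \<tau>^3 + Z2 / 24 * \<tau>^4"
    using d4 unfolding P_def Y_def V1_def V2_def V3_def Z2_def fact4 by (simp add: Df_def eval_nat_numeral)
  have cont3: "continuous_on {c-\<tau>..c+\<tau>} (\<lambda>s. Y3 s $ i)"
  proof -
    have "continuous_on I (\<lambda>s. Y3 s $ i)"
      by (rule DERIV_continuous_on) (rule vec_nth_deriv[OF Y34])
    then show ?thesis using II by (rule continuous_on_subset)
  qed
  have cont4: "continuous_on {c-\<tau>..c+\<tau>} (\<lambda>s. Y4 s $ i)"
  proof -
    have "continuous_on I (\<lambda>s. Y4 s $ i)"
      by (rule linear_continuous_on_compose[OF Y4_cont]) (rule bounded_linear.linear[OF bounded_linear_vec_nth])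
    then show ?thesis using II by (rule continuous_on_subset)
  qed
  obtain \<eta>1 where e1: "\<eta>1 \<in> {c-\<tau>..c+\<tau>}" "Y3 \<eta>1 $ i = (W1 + W2) / 2"
    using avg_IVT[OF cont3, of \<xi>1 \<xi>2] x1 x2 unfolding W1_def W2_def by auto
  obtain \<eta>2 where e2: "\<eta>2 \<in> {c-\<tau>..c+\<tau>}" "Y4 \<eta>2 $ i = (Z1 + Z2) / 2"
    using avg_IVT[OF cont4, of \<xi>3 \<xi>4] x3 x4 unfolding Z1_def Z2_def by auto
  define a where "a = 1/6 * Y3 \<eta>1 $ i"
  define b where "b = 1/12 * Y4 \<eta>2 $ i"
  have a_eq: "a = (W1 + W2) / 12" unfolding a_def e1 by simp
  have b_eq: "b = (Z1 + Z2) / 24" unfolding b_def e2 by simp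
  have TP: "T - P = 2 * V1 * \<tau> + 2 * \<tau>^3 * a"
    unfolding a_eq u3' d3' by (simp add: field_simps)
  have TP2: "T + P - 2 * Y = V2 * \<tau>^2 + \<tau>^4 * b"
    unfolding b_eq u4' by (subst d4') (simp add: field_simps)
  have hm2: "\<tau> * (x - P) + 2 * \<epsilon> * (x - 2 * Y + P) = 2 * \<tau>^2 * R"
  proof -
    have h1: "2 * \<tau>^2 * ((1 / (2 * \<tau>)) * (x - P)) = \<tau> * (x - P)"
      using tau by (simp add: power2_eq_square)
    have h2: "2 * \<tau>^2 * ((\<epsilon> / \<tau>^2) * (x - 2 * Y + P)) = 2 * \<epsilon> * (x - 2 * Y + P)"
      using tau by simp
    have "\<tau> * (x - P) + 2 * \<epsilon> * (x - 2 * Y + P) = 2 * \<tau>^2 * ((1 / (2 * \<tau>)) * (x - P)) + 2 * \<tau>^2 * ((\<epsilon> / \<tau>^2) * (x - 2 * Y + P))"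
      unfolding h1 h2 ..
    also have "\<dots> = 2 * \<tau>^2 * ((1 / (2 * \<tau>)) * (x - P) + (\<epsilon> / \<tau>^2) * (x - 2 * Y + P))"
      by (simp only: distrib_left)
    also have "\<dots> = 2 * \<tau>^2 * R" using hm unfolding P_def Y_def by simp
    finally show ?thesis .
  qed
  have key: "(\<tau> + 2 * \<epsilon>) * (T - x) = 2 * \<tau>^4 * (a + \<epsilon> * b)"
  proof -
    have "(\<tau> + 2 * \<epsilon>) * (T - x) = \<tau> * (T - P) + 2 * \<epsilon> * (T + P - 2 * Y) - (\<tau> * (x - P) + 2 * \<epsilon> * (x - 2 * Y + P))"
      by (simp add: algebra_simps)
    also have "\<dots> = \<tau> * (2 * V1 * \<tau> + 2 * \<tau>^3 * a) + 2 * \<epsilon> * (V2 * \<tau>^2 + \<tau>^4 * b) - 2 * \<tau>^2 * (V1 + \<epsilon> * V2)"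
      unfolding TP TP2 hm2 using ode unfolding V1_def V2_def by simp
    also have "\<dots> = 2 * \<tau>^4 * (a + \<epsilon> * b)"
      by (simp add: algebra_simps power2_eq_square power3_eq_cube power4_eq_xxxx)
    finally show ?thesis .
  qed
  have pos: "\<tau> + 2 * \<epsilon> > 0" using tau eps by simp
  have "T - x = 2 * \<tau>^4 / (\<tau> + 2 * \<epsilon>) * a + 2 * \<tau>^4 * \<epsilon> / (\<tau> + 2 * \<epsilon>) * b"
  proof -
    have "T - x = 2 * \<tau>^4 * (a + \<epsilon> * b) / (\<tau> + 2 * \<epsilon>)"
      using key pos by (simp add: field_simps)
    moreover have "2 * \<tau>^4 * (a + \<epsilon> * b) / (\<tau> + 2 * \<epsilon>) = 2 * \<tau>^4 / (\<tau> + 2 * \<epsilon>) * a + 2 * \<tau>^4 * \<epsilon> / (\<tau> + 2 * \<epsilon>) * b"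
      by (simp add: add_divide_distrib distrib_left)
    ultimately show ?thesis by simp
  qed
  then show ?thesis unfolding T_def
    using e1(1) e2(1) a_def b_def by blast
qed


lemma part2:
  fixes A :: "real^'n^'n" and y yd Y0 Y1 Y2 Y3 f :: "real \<Rightarrow> real^'n" and \<nu> :: "real^'n \<Rightarrow> real"
    and C \<omega> \<epsilon> a \<tau> :: real and I :: "real set"
  assumes tau: "\<tau> > 0" and eps: "\<epsilon> > 0" and om: "0 \<le> \<omega>"
    and sub: "{a..a+\<tau>} \<subseteq> I"
    and y_deriv: "\<And>s. s \<in> I \<Longrightarrow> (y has_vector_derivative yd s) (at s within I)"
    and y_ode: "\<And>s. s \<in> I \<Longrightarrow> yd s = - (A *v y s) + f s"
    and Y01: "\<And>s. s \<in> I \<Longrightarrow> (Y0 has_vector_derivative Y1 s) (at s within I)"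
    and Y23: "\<And>s. s \<in> I \<Longrightarrow> (Y2 has_vector_derivative Y3 s) (at s within I)"
    and Y_ode: "\<And>s. s \<in> I \<Longrightarrow> Y1 s + \<epsilon> *\<^sub>R Y2 s = - (A *v Y0 s) + f s"
    and init: "Y0 a = y a"
    and nu: "is_vector_norm \<nu>"
    and hypC: "\<forall>s\<ge>0. induced_norm \<nu> (mat_exp ((- s) *\<^sub>R A)) \<le> C * exp (- \<omega> * s)"
  shows "\<nu> (y (a+\<tau>) - Y0 (a+\<tau>)) \<le> C * \<epsilon> * \<tau> * phi (- \<omega> * \<tau>) * (SUP s \<in> {a..a+\<tau>}. \<nu> (Y2 s))"
proof -
  define b where "b = a + \<tau>"
  have ab: "a \<le> b" using tau b_def by simp
  have subI: "{a..b} \<subseteq> I" using sub b_def by simp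
  define M where "M = (SUP s \<in> {a..b}. \<nu> (Y2 s))"
  have contY2: "continuous_on {a..b} Y2"
  proof -
    have "continuous_on I Y2"
      unfolding continuous_on_eq_continuous_within
      using Y23 has_vector_derivative_continuous by blast
    then show ?thesis using subI by (rule continuous_on_subset)
  qed
  have bddM: "bdd_above ((\<lambda>s. \<nu> (Y2 s)) ` {a..b})"
  proof -
    have "continuous_on {a..b} (\<lambda>s. \<nu> (Y2 s))"
      using continuous_on_compose2[OF nu_cont[OF nu, of UNIV] contY2] by simp
    then have "compact ((\<lambda>s. \<nu> (Y2 s)) ` {a..b})" by (rule compact_continuous_image) simp
    then show ?thesis by (intro bounded_imp_bdd_above compact_imp_bounded)
  qed
  have nuY2M: "\<nu> (Y2 s) \<le> M" if "s \<in> {a..b}" for s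
    unfolding M_def by (rule cSUP_upper[OF that bddM])
  define D where "D s = y s - Y0 s" for s
  have Dderiv: "(D has_vector_derivative (- (A *v D s) + \<epsilon> *\<^sub>R Y2 s)) (at s within {a..b})" if "s \<in> {a..b}" for s
  proof -
    have sI: "s \<in> I" using that subI by auto
    have "(D has_vector_derivative (yd s - Y1 s)) (at s within I)"
      unfolding D_def by (intro has_vector_derivative_diff y_deriv Y01 sI)
    moreover have "yd s - Y1 s = - (A *v D s) + \<epsilon> *\<^sub>R Y2 s"
    proof -
      have "Y1 s = - (A *v Y0 s) + f s - \<epsilon> *\<^sub>R Y2 s" using Y_ode[OF sI] by (simp add: algebra_simps)
      then show ?thesis unfolding D_def y_ode[OF sI] by (simp add: matrix_vector_right_distrib algebra_simps)
    qed
    ultimately show ?thesis using subI by (auto intro: has_vector_derivative_within_subset)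
  qed
  define g where "g s = ES A (s - b) *v D s" for s
  have gderiv: "(g has_vector_derivative (ES A (s - b) *v (\<epsilon> *\<^sub>R Y2 s))) (at s within {a..b})" if "s \<in> {a..b}" for s
  proof -
    have d1: "((\<lambda>s. s - b) has_vector_derivative 1) (at s within {a..b})"
      using has_vector_derivative_diff[OF has_vector_derivative_id has_vector_derivative_const[of b]] by simp
    have d2: "(ES A has_vector_derivative (A ** ES A (s - b))) (at ((\<lambda>s. s - b) s) within (\<lambda>s. s - b) ` {a..b})"
      by (simp add: ES_deriv)
    have "(ES A \<circ> (\<lambda>s. s - b) has_vector_derivative 1 *\<^sub>R (A ** ES A (s - b))) (at s within {a..b})"
      by (rule vector_diff_chain_within[OF d1 d2])
    then have d3: "((\<lambda>s. ES A (s - b)) has_vector_derivative (A ** ES A (s - b))) (at s within {a..b})"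
      by (simp add: o_def)
    have "((\<lambda>s. ES A (s - b) *v D s) has_vector_derivative
           ES A (s - b) *v (- (A *v D s) + \<epsilon> *\<^sub>R Y2 s) + (A ** ES A (s - b)) *v D s) (at s within {a..b})"
      by (rule bounded_bilinear.has_vector_derivative[OF bb_mv d3 Dderiv[OF that]])
    moreover have "ES A (s - b) *v (- (A *v D s) + \<epsilon> *\<^sub>R Y2 s) + (A ** ES A (s - b)) *v D s
        = ES A (s - b) *v (\<epsilon> *\<^sub>R Y2 s)"
    proof -
      have "ES A (s - b) *v (A *v D s) = (A ** ES A (s - b)) *v D s"
        by (simp add: matrix_vector_mul_assoc ES_comm)
      moreover have neg: "M *v (- v) = - (M *v v)" for M :: "real^'n^'n" and v
        by (simp add: matrix_vector_mult_def vec_eq_iff sum_negf)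
      ultimately show ?thesis by (simp only: matrix_vector_right_distrib neg) simp
    qed
    ultimately show ?thesis unfolding g_def by simp
  qed
  have ga: "g a = 0" unfolding g_def D_def init by simp
  have gb: "g b = D b" unfolding g_def by (simp add: ES_zero)
  define kappa where "kappa s = (if \<omega> = 0 then s else exp (- \<omega> * (b - s)) / \<omega>)" for s
  have kderiv: "(kappa has_real_derivative exp (- \<omega> * (b - s))) (at s within {a..b})" for s
  proof (cases "\<omega> = 0")
    case True
    then show ?thesis unfolding kappa_def by (auto intro!: derivative_eq_intros)
  next
    case False
    have "((\<lambda>s. exp (- \<omega> * (b - s)) / \<omega>) has_real_derivative exp (- \<omega> * (b - s))) (at s within {a..b})"
      by (rule derivative_eq_intros refl | use False in simp)+
    then show ?thesis unfolding kappa_def using False by simp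
  qed
  have kdiff: "kappa b - kappa a = \<tau> * phi (- \<omega> * \<tau>)"
  proof (cases "\<omega> = 0")
    case True
    then show ?thesis unfolding kappa_def phi_def b_def by simp
  next
    case False
    then have "\<omega> > 0" using om by simp
    then have nz: "- \<omega> * \<tau> \<noteq> 0" using tau by simp
    have "kappa b - kappa a = (1 - exp (- \<omega> * \<tau>)) / \<omega>"
      unfolding kappa_def b_def using False by (simp add: diff_divide_distrib)
    also have "\<dots> = \<tau> * ((exp (- \<omega> * \<tau>) - 1) / (- \<omega> * \<tau>))"
      using False tau by (simp add: field_simps)
    finally show ?thesis unfolding phi_def using nz by simp
  qed
  have main: "w \<bullet> D b \<le> C * \<epsilon> * M * (kappa b - kappa a)" if w: "\<forall>v. w \<bullet> v \<le> \<nu> v" for w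
  proof -
    define F where "F s = w \<bullet> g s - C * \<epsilon> * M * kappa s" for s
    define F' where "F' s = w \<bullet> (ES A (s - b) *v (\<epsilon> *\<^sub>R Y2 s)) - C * \<epsilon> * M * exp (- \<omega> * (b - s))" for s
    have Fd: "(F has_derivative (*) (F' s)) (at s within {a..b})" if "a \<le> s" "s \<le> b" for s
    proof -
      have "s \<in> {a..b}" using that by simp
      have h1: "((\<lambda>s. w \<bullet> g s) has_vector_derivative w \<bullet> (ES A (s - b) *v (\<epsilon> *\<^sub>R Y2 s))) (at s within {a..b})"
        by (rule bounded_linear.has_vector_derivative[OF bounded_linear_inner_right gderiv[OF \<open>s \<in> {a..b}\<close>]])
      have h2: "((\<lambda>s. C * \<epsilon> * M * kappa s) has_real_derivative C * \<epsilon> * M * exp (- \<omega> * (b - s))) (at s within {a..b})"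
        by (rule DERIV_cmult[OF kderiv])
      have "(F has_real_derivative F' s) (at s within {a..b})"
        unfolding F_def F'_def
        by (rule DERIV_diff[OF h1[unfolded has_real_derivative_iff_has_vector_derivative[symmetric]] h2])
      then show ?thesis by (simp add: has_field_derivative_def)
    qed
    obtain \<xi> where xi: "\<xi> \<in> {a..b}" and eq: "F b - F a = F' \<xi> * (b - a)"
      using mvt_very_simple[OF ab Fd] by blast
    have "F' \<xi> \<le> 0"
    proof -
      let ?E = "ES A (\<xi> - b)"
      have hC: "induced_norm \<nu> ?E \<le> C * exp (- \<omega> * (b - \<xi>))"
      proof -
        have "b - \<xi> \<ge> 0" using xi by simp
        then have "induced_norm \<nu> (mat_exp ((- (b - \<xi>)) *\<^sub>R A)) \<le> C * exp (- \<omega> * (b - \<xi>))"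
          using hypC by blast
        then show ?thesis by (simp add: mat_exp_ES)
      qed
      have Cexp: "0 \<le> C * exp (- \<omega> * (b - \<xi>))" using hC induced_nonneg[OF nu, of ?E] by linarith
      have "w \<bullet> (?E *v (\<epsilon> *\<^sub>R Y2 \<xi>)) \<le> \<nu> (?E *v (\<epsilon> *\<^sub>R Y2 \<xi>))" using w by blast
      also have "\<dots> \<le> induced_norm \<nu> ?E * \<nu> (\<epsilon> *\<^sub>R Y2 \<xi>)" by (rule induced_le[OF nu])
      also have "\<dots> \<le> C * exp (- \<omega> * (b - \<xi>)) * \<nu> (\<epsilon> *\<^sub>R Y2 \<xi>)"
        by (intro mult_right_mono hC nu_nonneg[OF nu])
      also have "\<dots> = C * exp (- \<omega> * (b - \<xi>)) * (\<epsilon> * \<nu> (Y2 \<xi>))"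
        using eps by (simp add: nu_scale[OF nu])
      also have "\<dots> \<le> C * exp (- \<omega> * (b - \<xi>)) * (\<epsilon> * M)"
        using eps nuY2M[OF xi] by (intro mult_left_mono Cexp) auto
      also have "\<dots> = C * \<epsilon> * M * exp (- \<omega> * (b - \<xi>))" by (simp add: algebra_simps)
      finally show ?thesis unfolding F'_def by simp
    qed
    then have "F b - F a \<le> 0" using eq ab by (simp add: mult_nonpos_nonneg)
    then show ?thesis unfolding F_def ga gb by (simp add: algebra_simps)
  qed
  have "\<nu> (D b) \<le> C * \<epsilon> * M * (kappa b - kappa a)"
  proof (rule ccontr)
    assume "\<not> ?thesis"
    then have "C * \<epsilon> * M * (kappa b - kappa a) < \<nu> (D b)" by simp
    then obtain w where "\<forall>v. w \<bullet> v \<le> \<nu> v" "C * \<epsilon> * M * (kappa b - kappa a) < w \<bullet> D b"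
      using nu_functional[OF nu] by blast
    then show False using main by fastforce
  qed
  then have "\<nu> (D b) \<le> C * \<epsilon> * M * (\<tau> * phi (- \<omega> * \<tau>))" unfolding kdiff .
  then show ?thesis by (simp add: D_def M_def b_def ac_simps)
qed


theorem proposition2:
  fixes A :: "real^'n^'n" and \<omega> \<epsilon> \<tau> :: real and n :: nat
    and f y yd :: "real \<Rightarrow> real^'n"
    and I :: "real set"
    and Y0 Y1 Y2 Y3 Y4 :: "real \<Rightarrow> real^'n"
    and ynext :: "real^'n"
  defines "t \<equiv> (\<lambda>k::nat. real k * \<tau>)"
  assumes symA: "symmetric_matrix A" and psdA: "psd_matrix A"
    and omega: "smallest_eigenvalue A \<omega>" and omega_nonneg: "0 \<le> \<omega>"
    and f_cont: "continuous_on UNIV f"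
    and eps: "\<epsilon> > 0" and tau: "\<tau> > 0" and n: "n \<ge> 1"
    and I: "is_interval I" "{t (n - 1) .. t (n + 1)} \<subseteq> I"
    \<comment> \<open>y solves y' = -A y + f\<close>
    and y_deriv: "\<And>s. s \<in> I \<Longrightarrow> (y has_vector_derivative yd s) (at s within I)"
    and y_ode: "\<And>s. s \<in> I \<Longrightarrow> yd s = - (A *v y s) + f s"
    \<comment> \<open>ytilde = Y0 with derivatives Y1 .. Y4, four times continuously differentiable\<close>
    and Y01: "\<And>s. s \<in> I \<Longrightarrow> (Y0 has_vector_derivative Y1 s) (at s within I)"
    and Y12: "\<And>s. s \<in> I \<Longrightarrow> (Y1 has_vector_derivative Y2 s) (at s within I)"
    and Y23: "\<And>s. s \<in> I \<Longrightarrow> (Y2 has_vector_derivative Y3 s) (at s within I)"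
    and Y34: "\<And>s. s \<in> I \<Longrightarrow> (Y3 has_vector_derivative Y4 s) (at s within I)"
    and Y4_cont: "continuous_on I Y4"
    and Y_ode: "\<And>s. s \<in> I \<Longrightarrow> Y1 s + \<epsilon> *\<^sub>R Y2 s = - (A *v Y0 s) + f s"
    and Y_init0: "Y0 (t n) = y (t n)" and Y_init1: "Y1 (t n) = yd (t n)"
    \<comment> \<open>one HM step from y^{n-1} = ytilde(t_{n-1}), y^n = ytilde(t_n)\<close>
    and HM: "(1 / (2 * \<tau>)) *\<^sub>R (ynext - Y0 (t (n - 1)))
             + (\<epsilon> / \<tau>^2) *\<^sub>R (ynext - 2 *\<^sub>R Y0 (t n) + Y0 (t (n - 1)))
             = - (A *v Y0 (t n)) + f (t n)"
  shows "(\<exists>C1 C2 :: real^'n.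
            (\<forall>i. \<exists>\<eta>1 \<in> {t (n - 1) .. t (n + 1)}. C1 $ i = (1/6) * Y3 \<eta>1 $ i) \<and>
            (\<forall>i. \<exists>\<eta>2 \<in> {t (n - 1) .. t (n + 1)}. C2 $ i = (1/12) * Y4 \<eta>2 $ i) \<and>
            y (t (n + 1)) - ynext =
              (2 * \<tau>^4 / (\<tau> + 2 * \<epsilon>)) *\<^sub>R C1
              + (2 * \<tau>^4 * \<epsilon> / (\<tau> + 2 * \<epsilon>)) *\<^sub>R C2
              + (y (t (n + 1)) - Y0 (t (n + 1))))
         \<and> (\<forall>(\<nu> :: real^'n \<Rightarrow> real) C.
              is_vector_norm \<nu> \<longrightarrow>
              (\<forall>s\<ge>0. induced_norm \<nu> (mat_exp ((- s) *\<^sub>R A)) \<le> C * exp (- \<omega> * s)) \<longrightarrow>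
              \<nu> (y (t (n + 1)) - Y0 (t (n + 1)))
                \<le> C * \<epsilon> * \<tau> * phi (- \<omega> * \<tau>) * (SUP s \<in> {t n .. t (n + 1)}. \<nu> (Y2 s)))"
  proof -
  have tn1: "t (n - 1) = t n - \<tau>" using n unfolding t_def by (simp add: of_nat_diff algebra_simps)
  have tn2: "t (n + 1) = t n + \<tau>" unfolding t_def by (simp add: algebra_simps)
  define c where "c = t n"
  have II: "{c - \<tau>..c + \<tau>} \<subseteq> I" using I(2) unfolding tn1 tn2 c_def .
  have cI: "c \<in> I" using II tau by auto
  have comp: "\<forall>i. \<exists>a b. (\<exists>\<eta>\<in>{c-\<tau>..c+\<tau>}. a = 1/6 * Y3 \<eta> $ i) \<and> (\<exists>\<eta>\<in>{c-\<tau>..c+\<tau>}. b = 1/12 * Y4 \<eta> $ i) \<and>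
           Y0 (c + \<tau>) $ i - ynext $ i = 2 * \<tau>^4 / (\<tau> + 2 * \<epsilon>) * a + 2 * \<tau>^4 * \<epsilon> / (\<tau> + 2 * \<epsilon>) * b"
  proof
    fix i
    show "\<exists>a b. (\<exists>\<eta>\<in>{c-\<tau>..c+\<tau>}. a = 1/6 * Y3 \<eta> $ i) \<and> (\<exists>\<eta>\<in>{c-\<tau>..c+\<tau>}. b = 1/12 * Y4 \<eta> $ i) \<and>
           Y0 (c + \<tau>) $ i - ynext $ i = 2 * \<tau>^4 / (\<tau> + 2 * \<epsilon>) * a + 2 * \<tau>^4 * \<epsilon> / (\<tau> + 2 * \<epsilon>) * b"
    proof (rule part1_comp[OF tau eps II Y01 Y12 Y23 Y34 Y4_cont])
      show "Y1 c $ i + \<epsilon> * Y2 c $ i = (- (A *v Y0 c) + f c) $ i"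
        using arg_cong[OF Y_ode[OF cI], of "\<lambda>v. v $ i"] by simp
      show "(1 / (2 * \<tau>)) * (ynext $ i - Y0 (c - \<tau>) $ i) + (\<epsilon> / \<tau>^2) * (ynext $ i - 2 * Y0 c $ i + Y0 (c - \<tau>) $ i) = (- (A *v Y0 c) + f c) $ i"
        using arg_cong[OF HM, of "\<lambda>v. v $ i"] unfolding tn1 c_def by simp
    qed
  qed
  from choice[OF comp] obtain af where h1: "\<forall>i. \<exists>b. (\<exists>\<eta>\<in>{c-\<tau>..c+\<tau>}. af i = 1/6 * Y3 \<eta> $ i) \<and> (\<exists>\<eta>\<in>{c-\<tau>..c+\<tau>}. b = 1/12 * Y4 \<eta> $ i) \<and>
           Y0 (c + \<tau>) $ i - ynext $ i = 2 * \<tau>^4 / (\<tau> + 2 * \<epsilon>) * af i + 2 * \<tau>^4 * \<epsilon> / (\<tau> + 2 * \<epsilon>) * b"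
    by blast
  from choice[OF h1] obtain bf where h2: "\<forall>i. (\<exists>\<eta>\<in>{c-\<tau>..c+\<tau>}. af i = 1/6 * Y3 \<eta> $ i) \<and> (\<exists>\<eta>\<in>{c-\<tau>..c+\<tau>}. bf i = 1/12 * Y4 \<eta> $ i) \<and>
           Y0 (c + \<tau>) $ i - ynext $ i = 2 * \<tau>^4 / (\<tau> + 2 * \<epsilon>) * af i + 2 * \<tau>^4 * \<epsilon> / (\<tau> + 2 * \<epsilon>) * bf i"
    by blast
  define C1 :: "real^'n" where "C1 = (\<chi> i. af i)"
  define C2 :: "real^'n" where "C2 = (\<chi> i. bf i)"
  have P1: "(\<forall>i. \<exists>\<eta>1 \<in> {t (n - 1) .. t (n + 1)}. C1 $ i = (1/6) * Y3 \<eta>1 $ i) \<and>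
            (\<forall>i. \<exists>\<eta>2 \<in> {t (n - 1) .. t (n + 1)}. C2 $ i = (1/12) * Y4 \<eta>2 $ i) \<and>
            y (t (n + 1)) - ynext =
              (2 * \<tau>^4 / (\<tau> + 2 * \<epsilon>)) *\<^sub>R C1
              + (2 * \<tau>^4 * \<epsilon> / (\<tau> + 2 * \<epsilon>)) *\<^sub>R C2
              + (y (t (n + 1)) - Y0 (t (n + 1)))"
  proof (intro conjI)
    show "\<forall>i. \<exists>\<eta>1 \<in> {t (n - 1) .. t (n + 1)}. C1 $ i = (1/6) * Y3 \<eta>1 $ i"
      using h2 unfolding C1_def tn1 tn2 c_def by simp
    show "\<forall>i. \<exists>\<eta>2 \<in> {t (n - 1) .. t (n + 1)}. C2 $ i = (1/12) * Y4 \<eta>2 $ i"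
      using h2 unfolding C2_def tn1 tn2 c_def by simp
    show "y (t (n + 1)) - ynext =
              (2 * \<tau>^4 / (\<tau> + 2 * \<epsilon>)) *\<^sub>R C1
              + (2 * \<tau>^4 * \<epsilon> / (\<tau> + 2 * \<epsilon>)) *\<^sub>R C2
              + (y (t (n + 1)) - Y0 (t (n + 1)))"
    proof (rule vec_eq_iff[THEN iffD2], rule allI)
      fix i
      have e: "Y0 (c + \<tau>) $ i - ynext $ i = 2 * \<tau>^4 / (\<tau> + 2 * \<epsilon>) * af i + 2 * \<tau>^4 * \<epsilon> / (\<tau> + 2 * \<epsilon>) * bf i"
        using h2 by blast
      show "(y (t (n + 1)) - ynext) $ i = ((2 * \<tau>^4 / (\<tau> + 2 * \<epsilon>)) *\<^sub>R C1
              + (2 * \<tau>^4 * \<epsilon> / (\<tau> + 2 * \<epsilon>)) *\<^sub>R C2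
              + (y (t (n + 1)) - Y0 (t (n + 1)))) $ i"
        unfolding tn2 c_def[symmetric] C1_def C2_def using e by simp
    qed
  qed
  have P2: "\<forall>(\<nu> :: real^'n \<Rightarrow> real) C.
              is_vector_norm \<nu> \<longrightarrow>
              (\<forall>s\<ge>0. induced_norm \<nu> (mat_exp ((- s) *\<^sub>R A)) \<le> C * exp (- \<omega> * s)) \<longrightarrow>
              \<nu> (y (t (n + 1)) - Y0 (t (n + 1)))
                \<le> C * \<epsilon> * \<tau> * phi (- \<omega> * \<tau>) * (SUP s \<in> {t n .. t (n + 1)}. \<nu> (Y2 s))"
  proof (intro allI impI)
    fix \<nu> :: "real^'n \<Rightarrow> real" and C :: real
    assume nu: "is_vector_norm \<nu>" and hC: "\<forall>s\<ge>0. induced_norm \<nu> (mat_exp ((- s) *\<^sub>R A)) \<le> C * exp (- \<omega> * s)"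
    have sub: "{c..c+\<tau>} \<subseteq> I" using II by auto
    have init: "Y0 c = y c" using Y_init0 unfolding c_def .
    show "\<nu> (y (t (n + 1)) - Y0 (t (n + 1))) \<le> C * \<epsilon> * \<tau> * phi (- \<omega> * \<tau>) * (SUP s \<in> {t n .. t (n + 1)}. \<nu> (Y2 s))"
      unfolding tn2 c_def[symmetric]
      by (rule part2[OF tau eps omega_nonneg sub y_deriv y_ode Y01 Y23 Y_ode init nu hC])
  qed
  show ?thesis using P1 P2 by blast
qed

end
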